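(* Let $s,k$ be positive integers with $s\leq\tfrac15 k$ and let $\vec s=(s,\dots,s)\in\mathbb{Z}_+^k$. Then \[ \mathrm{LCS}_2(4,\mathcal P_{\vec s})\leq(2s^2k)^{1/3}+\tfrac53 s+s^{4/3}k^{-1/3}. \]
   Context: For $\vec s\in\mathbb{Z}_+^k$, an $\vec s$-multipermutation is a word over $\{1,\dots,k\}$ in which each letter $l$ appears exactly $s_l$ times; $\mathcal P_{\vec s}$ is the set of all of them. $\mathrm{LCS}(w,w')$ is the length of a longest common subsequence of words $w,w'$. $\mathrm{LCS}_2(t,\mathcal P_{\vec s})$ is the minimum, over all sets of $t$ distinct elements of $\mathcal P_{\vec s}$, of the maximum $\mathrm{LCS}$ of two distinct members of the set. *)

theory Defs
  imports Complex_Main "HOL-Library.Sublist"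
begin

definition multiperms :: "nat \<Rightarrow> (nat \<Rightarrow> nat) \<Rightarrow> nat list set" where
  "multiperms k s = {w. set w \<subseteq> {1..k} \<and> (\<forall>l\<in>{1..k}. count_list w l = s l)}"

definition LCS :: "'a list \<Rightarrow> 'a list \<Rightarrow> nat" where
  "LCS w w' = Max {length u | u. subseq u w \<and> subseq u w'}"

definition LCS2 :: "nat \<Rightarrow> 'a list set \<Rightarrow> nat" where
  "LCS2 t P = Min {Max {LCS w w' | w w'. w \<in> T \<and> w' \<in> T \<and> w \<noteq> w'} | T.
                      T \<subseteq> P \<and> card T = t}"

end

theory Submission
  imports Defs
begin


lemma subseq_sorted_wrt:
  assumes "subseq u w" "sorted_wrt R w" shows "sorted_wrt R u"
  using assms
proof (induction rule: list_emb.induct)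
  case (list_emb_Nil ys) then show ?case by simp
next
  case (list_emb_Cons xs ys y) then show ?case by simp
next
  case (list_emb_Cons2 x y xs ys)
  then show ?case using list_emb_set[OF list_emb_Cons2(2)] by auto
qed

lemma subseq_set: "subseq u w \<Longrightarrow> set u \<subseteq> set w"
  by (induction rule: list_emb.induct) auto

lemma subseq_map_inv:
  assumes "subseq u (map f w)" shows "\<exists>u'. u = map f u' \<and> subseq u' w"
  using assms
proof (induction w arbitrary: u)
  case Nil then show ?case using list_emb_Nil2 by fastforce
next
  case (Cons a w)
  show ?case
  proof (cases u)
    case Nil then show ?thesis by (intro exI[of _ "[]"]) simp
  next
    case (Cons b u1)
    show ?thesis
    proof (cases "b = f a")
      case True
      with Cons Cons.prems have "subseq u1 (map f w)" by simp
      with Cons.IH obtain u' where "u1 = map f u'" "subseq u' w" by blast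
      then show ?thesis using Cons True by (intro exI[of _ "a#u'"]) simp
    next
      case False
      with Cons Cons.prems have "subseq u (map f w)" by simp
      with Cons.IH obtain u' where "u = map f u'" "subseq u' w" by blast
      then show ?thesis by (intro exI[of _ u']) (simp add: list_emb_Cons)
    qed
  qed
qed

fun brk :: "('a \<Rightarrow> 'a \<Rightarrow> bool) \<Rightarrow> 'a list \<Rightarrow> nat" where
  "brk R (a#b#xs) = (if R a b then 0 else 1) + brk R (b#xs)"
| "brk R _ = 0"

lemma brk_sorted: "sorted_wrt R u \<Longrightarrow> brk R u = 0"
  by (induction R u rule: brk.induct) auto

lemma brk_append: "brk R (u1 @ u2) \<le> brk R u1 + 1 + brk R u2"
  apply (induction R u1 rule: brk.induct)
    apply simp_all
  apply (case_tac u2)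
  by auto

lemma brk_concat:
  assumes "subseq u (concat Ls)" "\<forall>L\<in>set Ls. sorted_wrt R L"
  shows "brk R u + 1 \<le> max 1 (length Ls)"
  using assms
proof (induction Ls arbitrary: u)
  case Nil then show ?case using list_emb_Nil2 by fastforce
next
  case (Cons L Ls)
  from Cons.prems(1) obtain u1 u2 where u: "u = u1 @ u2" "subseq u1 L" "subseq u2 (concat Ls)"
    by (auto elim: subseq_appendE)
  have "sorted_wrt R u1" using u(2) Cons.prems(2) subseq_sorted_wrt by auto
  then have b1: "brk R u1 = 0" by (rule brk_sorted)
  have ih: "brk R u2 + 1 \<le> max 1 (length Ls)" using Cons.IH u(3) Cons.prems(2) by auto
  show ?case
  proof (cases "u2 = []")
    case True then show ?thesis using u b1 by simp
  next
    case False
    then have "brk R u2 + 1 \<le> length Ls"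
    proof -
      have "Ls \<noteq> []" using False u(3) by auto
      then show ?thesis using ih by (cases Ls) auto
    qed
    then show ?thesis using brk_append[of R u1 u2] u b1 by simp
  qed
qed

lemma brk_two:
  assumes "\<forall>a\<in>set u. \<forall>b\<in>set u. \<not> (R a b \<and> S a b)"
  shows "length u \<le> brk R u + brk S u + 1"
  using assms by (induction R u rule: brk.induct) auto

lemma brk_mono_range:
  fixes g :: "'a \<Rightarrow> nat"
  assumes "sorted_wrt (\<lambda>a b. g a \<le> g b) u" "u \<noteq> []"
  shows "brk (\<lambda>a b. g b \<le> g a) u + g (hd u) \<le> g (last u)"
  using assms
proof (induction u)
  case Nil then show ?case by simp
next
  case (Cons a u)
  show ?case
  proof (cases u)
    case Nil then show ?thesis by simp
  next
    case (Cons b v)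
    have "brk (\<lambda>a b. g b \<le> g a) u + g (hd u) \<le> g (last u)"
      using Cons.IH Cons.prems Cons by auto
    moreover have "g a \<le> g b" using Cons.prems Cons by auto
    ultimately show ?thesis using Cons by auto
  qed
qed



lemma LCS_le:
  assumes "\<And>u. subseq u w \<Longrightarrow> subseq u w' \<Longrightarrow> length u \<le> n"
  shows "LCS w w' \<le> n"
proof -
  have fin: "finite {length u | u. subseq u w \<and> subseq u w'}"
    by (rule finite_subset[of _ "{..length w}"]) (auto dest: list_emb_length)
  have ne: "{length u | u. subseq u w \<and> subseq u w'} \<noteq> {}" by auto
  show ?thesis unfolding LCS_def using fin ne assms by (auto intro!: Max.boundedI)
qed

lemma length_partition:
  assumes "finite V" "\<phi> ` set u \<subseteq> V"
  shows "length u = (\<Sum>v\<in>V. length (filter (\<lambda>t. \<phi> t = v) u))"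
  using assms(2)
proof (induction u)
  case Nil then show ?case by simp
next
  case (Cons a u)
  have "(\<Sum>v\<in>V. length (filter (\<lambda>t. \<phi> t = v) (a#u)))
      = (\<Sum>v\<in>V. (if \<phi> a = v then 1 else 0) + length (filter (\<lambda>t. \<phi> t = v) u))"
    by (rule sum.cong) auto
  also have "\<dots> = (\<Sum>v\<in>V. (if \<phi> a = v then 1 else 0)) + (\<Sum>v\<in>V. length (filter (\<lambda>t. \<phi> t = v) u))"
    by (rule sum.distrib)
  also have "(\<Sum>v\<in>V. (if \<phi> a = v then 1 else 0)) = (1::nat)"
    using Cons.prems assms(1) by (simp add: sum.delta)
  finally show ?case using Cons by simp
qed

lemma D1:
  assumes "subseq u w" "subseq u w'" "finite V" "\<phi> ` set w \<subseteq> V"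
    and "\<And>v u'. v \<in> V \<Longrightarrow> subseq u' (filter (\<lambda>t. \<phi> t = v) w)
          \<Longrightarrow> subseq u' (filter (\<lambda>t. \<phi> t = v) w') \<Longrightarrow> length u' \<le> b"
  shows "length u \<le> card V * b"
proof -
  have "\<phi> ` set u \<subseteq> V" using assms(1,4) list_emb_set[OF assms(1)] by blast
  then have "length u = (\<Sum>v\<in>V. length (filter (\<lambda>t. \<phi> t = v) u))"
    using length_partition assms(3) by blast
  also have "\<dots> \<le> (\<Sum>v\<in>V. b)"
    by (rule sum_mono) (rule assms(5), auto intro: subseq_filter assms(1,2))
  finally show ?thesis by simp
qed

lemma D2:
  assumes "subseq u w" "subseq u w'"
    and "sorted_wrt (\<lambda>a b. \<phi> a \<le> \<phi> b) w" "sorted_wrt (\<lambda>a b. \<phi> b \<le> (\<phi> a :: nat)) w'"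
    and "\<And>v u'. subseq u' (filter (\<lambda>t. \<phi> t = v) w)
          \<Longrightarrow> subseq u' (filter (\<lambda>t. \<phi> t = v) w') \<Longrightarrow> length u' \<le> b"
  shows "length u \<le> b"
proof (cases u)
  case Nil then show ?thesis using assms(5)[of "[]"] by auto
next
  case (Cons a u1)
  have s1: "sorted_wrt (\<lambda>a b. \<phi> a \<le> \<phi> b) u" using subseq_sorted_wrt assms(1,3) by blast
  have s2: "sorted_wrt (\<lambda>a b. \<phi> b \<le> \<phi> a) u" using subseq_sorted_wrt assms(2,4) by blast
  have "\<forall>t\<in>set u. \<phi> t = \<phi> a" using s1 s2 Cons by fastforce
  then have "filter (\<lambda>t. \<phi> t = \<phi> a) u = u" by simp
  then show ?thesis using assms(5)[of u "\<phi> a"] assms(1,2) subseq_filter by metis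
qed

lemma filter_concat_map:
  assumes "\<forall>x\<in>set xs. \<forall>t\<in>set (F x). \<phi> t = x"
  shows "filter (\<lambda>t. \<phi> t = v) (concat (map F xs)) = concat (map F (filter (\<lambda>x. x = v) xs))"
  using assms
proof (induction xs)
  case Nil then show ?case by simp
next
  case (Cons a xs)
  then show ?case by (auto simp: filter_empty_conv intro!: filter_True)
qed

lemma filter_eq_distinct:
  "distinct xs \<Longrightarrow> filter (\<lambda>x. x = v) xs = (if v \<in> set xs then [v] else [])"
  by (induction xs) (auto simp: filter_empty_conv)

lemma sorted_concat_map:
  assumes "\<forall>x\<in>set xs. \<forall>t\<in>set (F x). \<phi> t = x" "sorted_wrt Rel xs" "\<And>x. Rel x x"
  shows "sorted_wrt (\<lambda>a b. Rel (\<phi> a) (\<phi> b)) (concat (map F xs))"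
  using assms(1,2)
proof (induction xs)
  case Nil then show ?case by simp
next
  case (Cons a xs)
  have "sorted_wrt (\<lambda>a b. Rel (\<phi> a) (\<phi> b)) (F a)"
    using Cons.prems assms(3) by (auto simp: sorted_wrt_iff_nth_less)
  then show ?case using Cons by (auto simp: sorted_wrt_append)
qed



lemma GD1:
  assumes "subseq u (concat (map F1 xs1))" "subseq u (concat (map F2 xs2))"
    and "\<forall>x\<in>set xs1. \<forall>t\<in>set (F1 x). \<phi> t = x" "\<forall>x\<in>set xs2. \<forall>t\<in>set (F2 x). \<phi> t = x"
    and "distinct xs1" "distinct xs2" "set xs1 = {..<n}" "set xs2 = {..<n}"
    and "\<And>x u'. x < n \<Longrightarrow> subseq u' (F1 x) \<Longrightarrow> subseq u' (F2 x) \<Longrightarrow> length u' \<le> b"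
  shows "length u \<le> n * b"
proof -
  have "\<phi> ` set (concat (map F1 xs1)) \<subseteq> {..<n}" using assms(3,7) by auto
  then have "length u \<le> card {..<n} * b"
  proof (rule D1[OF assms(1,2) finite_lessThan])
    fix v u' assume v: "v \<in> {..<n}"
      and h1: "subseq u' (filter (\<lambda>t. \<phi> t = v) (concat (map F1 xs1)))"
      and h2: "subseq u' (filter (\<lambda>t. \<phi> t = v) (concat (map F2 xs2)))"
    have "filter (\<lambda>t. \<phi> t = v) (concat (map F1 xs1)) = F1 v"
      using filter_concat_map[OF assms(3)] filter_eq_distinct[OF assms(5)] assms(7) v by simp
    moreover have "filter (\<lambda>t. \<phi> t = v) (concat (map F2 xs2)) = F2 v"
      using filter_concat_map[OF assms(4)] filter_eq_distinct[OF assms(6)] assms(8) v by simp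
    ultimately show "length u' \<le> b" using assms(9) v h1 h2 by simp
  qed
  then show ?thesis by simp
qed

lemma GD2:
  assumes "subseq u (concat (map F1 xs1))" "subseq u (concat (map F2 xs2))"
    and "\<forall>x\<in>set xs1. \<forall>t\<in>set (F1 x). \<phi> t = (x::nat)" "\<forall>x\<in>set xs2. \<forall>t\<in>set (F2 x). \<phi> t = x"
    and "distinct xs1" "distinct xs2" "set xs1 = {..<(n::nat)}" "set xs2 = {..<n}"
    and "sorted_wrt (\<le>) xs1" "sorted_wrt (\<ge>) xs2"
    and "\<And>x u'. x < n \<Longrightarrow> subseq u' (F1 x) \<Longrightarrow> subseq u' (F2 x) \<Longrightarrow> length u' \<le> (b::nat)"
  shows "length u \<le> b"
proof (rule D2[OF assms(1,2)])
  show "sorted_wrt (\<lambda>a b. \<phi> a \<le> \<phi> b) (concat (map F1 xs1))"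
    using sorted_concat_map[OF assms(3,9)] by simp
  show "sorted_wrt (\<lambda>a b. \<phi> b \<le> \<phi> a) (concat (map F2 xs2))"
    using sorted_concat_map[OF assms(4,10)] by simp
  fix v u' assume h1: "subseq u' (filter (\<lambda>t. \<phi> t = v) (concat (map F1 xs1)))"
      and h2: "subseq u' (filter (\<lambda>t. \<phi> t = v) (concat (map F2 xs2)))"
  show "length u' \<le> b"
  proof (cases "v < n")
    case True
    have "filter (\<lambda>t. \<phi> t = v) (concat (map F1 xs1)) = F1 v"
      using filter_concat_map[OF assms(3)] filter_eq_distinct[OF assms(5)] assms(7) True by simp
    moreover have "filter (\<lambda>t. \<phi> t = v) (concat (map F2 xs2)) = F2 v"
      using filter_concat_map[OF assms(4)] filter_eq_distinct[OF assms(6)] assms(8) True by simp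
    ultimately show ?thesis using assms(11) True h1 h2 by simp
  next
    case False
    have "filter (\<lambda>t. \<phi> t = v) (concat (map F1 xs1)) = []"
      using filter_concat_map[OF assms(3)] filter_eq_distinct[OF assms(5)] assms(7) False by simp
    then show ?thesis using h1 list_emb_Nil2 by fastforce
  qed
qed

lemma subseq_sym_bound:
  "(\<And>u. subseq u w \<Longrightarrow> subseq u w' \<Longrightarrow> length u \<le> b) \<Longrightarrow> subseq u w' \<Longrightarrow> subseq u w \<Longrightarrow> length u \<le> b"
  by blast

definition blk :: "nat \<Rightarrow> nat \<Rightarrow> nat \<Rightarrow> nat list \<Rightarrow> (nat \<times> nat \<times> nat) list" where
  "blk s x y zs = concat (map (\<lambda>z. replicate s (x,y,z)) zs)"

definition intl :: "nat \<Rightarrow> nat \<Rightarrow> nat \<Rightarrow> nat list \<Rightarrow> (nat \<times> nat \<times> nat) list" where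
  "intl s x y zs = concat (replicate s (map (\<lambda>z. (x,y,z)) zs))"

abbreviation zc :: "nat \<times> nat \<times> nat \<Rightarrow> nat" where "zc t \<equiv> snd (snd t)"

lemma up_sorted: "sorted_wrt (\<le>) [0..<(R::nat)]"
  by (rule sorted_upt)

lemma dn_sorted: "sorted_wrt (\<ge>) (rev [0..<(R::nat)])"
  using up_sorted[of R] by (simp add: sorted_wrt_rev)

lemma blk_sorted_up: "sorted_wrt (\<lambda>a b. zc a \<le> zc b) (blk s x y [0..<R])"
  unfolding blk_def by (rule sorted_concat_map[OF _ up_sorted]) auto

lemma blk_sorted_dn: "sorted_wrt (\<lambda>a b. zc b \<le> zc a) (blk s x y (rev [0..<R]))"
  unfolding blk_def by (rule sorted_concat_map[OF _ dn_sorted]) auto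

lemma brk_intl:
  assumes "subseq u (intl s x y zs)" "sorted_wrt (\<lambda>a b. Rel (zc a) (zc b)) (map (\<lambda>z. (x,y,z)) zs)"
  shows "brk (\<lambda>a b. Rel (zc a) (zc b)) u + 1 \<le> max 1 s"
  using brk_concat[of u "replicate s (map (\<lambda>z. (x,y,z)) zs)" "\<lambda>a b. Rel (zc a) (zc b)"] assms
  unfolding intl_def by simp

lemma set_intl: "set (intl s x y zs) \<subseteq> (\<lambda>z. (x,y,z)) ` set zs"
  unfolding intl_def by (cases s) auto

lemma set_blk: "set (blk s x y zs) \<subseteq> (\<lambda>z. (x,y,z)) ` set zs"
  unfolding blk_def by auto

lemma base0:
  assumes "subseq u (blk s x y [0..<R])" "subseq u (blk s x y (rev [0..<R]))"
  shows "length u \<le> s"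
proof -
  have "length u \<le> s"
  proof (rule D2[OF assms blk_sorted_up blk_sorted_dn])
    fix v u' assume h: "subseq u' (filter (\<lambda>t. zc t = v) (blk s x y [0..<R]))"
    have "filter (\<lambda>t. zc t = v) (blk s x y [0..<R]) = concat (map (\<lambda>z. replicate s (x,y,z)) (filter (\<lambda>z. z = v) [0..<R]))"
      unfolding blk_def by (rule filter_concat_map) auto
    also have "\<dots> = (if v < R then replicate s (x,y,v) else [])"
      by (simp add: filter_eq_distinct)
    finally show "length u' \<le> s" using list_emb_length[OF h] by (auto split: if_splits)
  qed
  then show ?thesis .
qed

lemma base2:
  assumes "subseq u (blk s x y [0..<R])" "subseq u (intl s x y (rev [0..<R]))" "0 < s"
  shows "length u \<le> s"
proof -
  have s1: "sorted_wrt (\<lambda>a b. zc a \<le> zc b) u" using subseq_sorted_wrt[OF assms(1) blk_sorted_up] .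
  have "brk (\<lambda>a b. zc a > zc b) u + 1 \<le> max 1 s"
    by (rule brk_intl[OF assms(2)]) (simp add: sorted_wrt_rev sorted_wrt_map)
  moreover have "length u \<le> brk (\<lambda>a b. zc a \<le> zc b) u + brk (\<lambda>a b. zc a > zc b) u + 1"
    by (rule brk_two) auto
  ultimately show ?thesis using brk_sorted[OF s1] assms(3) by simp
qed

lemma base2':
  assumes "subseq u (blk s x y (rev [0..<R]))" "subseq u (intl s x y [0..<R])" "0 < s"
  shows "length u \<le> s"
proof -
  have s1: "sorted_wrt (\<lambda>a b. zc b \<le> zc a) u" using subseq_sorted_wrt[OF assms(1) blk_sorted_dn] .
  have "brk (\<lambda>a b. zc a < zc b) u + 1 \<le> max 1 s"
    by (rule brk_intl[OF assms(2)]) (simp add: sorted_wrt_map)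
  moreover have "length u \<le> brk (\<lambda>a b. zc b \<le> zc a) u + brk (\<lambda>a b. zc a < zc b) u + 1"
    by (rule brk_two) auto
  ultimately show ?thesis using brk_sorted[OF s1] assms(3) by simp
qed

lemma base4:
  assumes "subseq u (intl s x y (rev [0..<R]))" "subseq u (intl s x y [0..<R])" "0 < s"
  shows "length u \<le> 2*s - 1"
proof -
  have "brk (\<lambda>a b. zc a > zc b) u + 1 \<le> max 1 s"
    by (rule brk_intl[OF assms(1)]) (simp add: sorted_wrt_rev sorted_wrt_map)
  moreover have "brk (\<lambda>a b. zc a < zc b) u + 1 \<le> max 1 s"
    by (rule brk_intl[OF assms(2)]) (simp add: sorted_wrt_map)
  moreover have "length u \<le> brk (\<lambda>a b. zc a > zc b) u + brk (\<lambda>a b. zc a < zc b) u + 1"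
    by (rule brk_two) auto
  ultimately show ?thesis using assms(3) by simp
qed

lemma base3:
  assumes "subseq u (blk s x y [0..<R])" "subseq u (intl s x y [0..<R])" "0 < s"
  shows "length u \<le> s + R - 1"
proof (cases "u = []")
  case True then show ?thesis by simp
next
  case False
  have s1: "sorted_wrt (\<lambda>a b. zc a \<le> zc b) u" using subseq_sorted_wrt[OF assms(1) blk_sorted_up] .
  have "set u \<subseteq> (\<lambda>z. (x,y,z)) ` set ([0..<R])" using subseq_set[OF assms(1)] set_blk[of s x y "[0..<R]"] by blast
  then have zr: "\<forall>t\<in>set u. zc t < R" by auto
  have "brk (\<lambda>a b. zc b \<le> zc a) u + zc (hd u) \<le> zc (last u)" by (rule brk_mono_range[OF s1 False])
  moreover have "zc (last u) < R" using zr False by simp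
  moreover have "brk (\<lambda>a b. zc a < zc b) u + 1 \<le> max 1 s"
    by (rule brk_intl[OF assms(2)]) (simp add: sorted_wrt_map)
  moreover have "length u \<le> brk (\<lambda>a b. zc a < zc b) u + brk (\<lambda>a b. zc b \<le> zc a) u + 1"
    by (rule brk_two) auto
  ultimately show ?thesis using assms(3) by simp
qed

lemma base3':
  assumes "subseq u (blk s x y (rev [0..<R]))" "subseq u (intl s x y (rev [0..<R]))" "0 < s"
  shows "length u \<le> s + R - 1"
proof (cases "u = []")
  case True then show ?thesis by simp
next
  case False
  define g where "g t = R - zc t" for t
  have "set u \<subseteq> (\<lambda>z. (x,y,z)) ` set (rev [0..<R])" using subseq_set[OF assms(1)] set_blk[of s x y "rev [0..<R]"] by blast
  then have zr: "\<forall>t\<in>set u. zc t < R" by auto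
  have s0: "sorted_wrt (\<lambda>a b. zc b \<le> zc a) u" using subseq_sorted_wrt[OF assms(1) blk_sorted_dn] .
  have s1: "sorted_wrt (\<lambda>a b. g a \<le> g b) u"
    unfolding g_def by (rule sorted_wrt_mono_rel[OF _ s0]) (rule diff_le_mono2)
  have "brk (\<lambda>a b. g b \<le> g a) u + g (hd u) \<le> g (last u)" by (rule brk_mono_range[OF s1 False])
  moreover have "g (last u) \<le> R" unfolding g_def by auto
  moreover have "zc (hd u) < R" using zr hd_in_set[OF False] by blast
  then have "g (hd u) \<ge> 1" unfolding g_def by auto
  moreover have "brk (\<lambda>a b. zc a > zc b) u + 1 \<le> max 1 s"
    by (rule brk_intl[OF assms(2)]) (simp add: sorted_wrt_rev sorted_wrt_map)
  moreover have "length u \<le> brk (\<lambda>a b. zc a > zc b) u + brk (\<lambda>a b. g b \<le> g a) u + 1"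
    by (rule brk_two) (use zr in \<open>auto simp: g_def\<close>)
  ultimately show ?thesis using assms(3) by simp
qed



definition W :: "(nat \<Rightarrow> nat \<Rightarrow> (nat \<times> nat \<times> nat) list) \<Rightarrow> nat list \<Rightarrow> nat list \<Rightarrow> (nat \<times> nat \<times> nat) list" where
  "W G xs ys = concat (map (\<lambda>x. concat (map (\<lambda>y. G x y) ys)) xs)"

definition cellok :: "(nat \<Rightarrow> nat \<Rightarrow> (nat \<times> nat \<times> nat) list) \<Rightarrow> nat \<Rightarrow> bool" where
  "cellok G R \<longleftrightarrow> (\<forall>x y. set (G x y) \<subseteq> (\<lambda>z. (x,y,z)) ` {..<R})"

lemma cellok_blk_up: "cellok (\<lambda>x y. blk s x y [0..<R]) R"
  unfolding cellok_def using set_blk by fastforce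
lemma cellok_blk_dn: "cellok (\<lambda>x y. blk s x y (rev [0..<R])) R"
  unfolding cellok_def using set_blk by fastforce
lemma cellok_intl_up: "cellok (\<lambda>x y. intl s x y [0..<R]) R"
  unfolding cellok_def using set_intl by fastforce
lemma cellok_intl_dn: "cellok (\<lambda>x y. intl s x y (rev [0..<R])) R"
  unfolding cellok_def using set_intl by fastforce

lemma row_keys: "cellok G R \<Longrightarrow> \<forall>x\<in>set xs. \<forall>t\<in>set (concat (map (\<lambda>y. G x y) ys)). fst t = x"
  unfolding cellok_def by fastforce

lemma cell_keys: "cellok G R \<Longrightarrow> \<forall>y\<in>set ys. \<forall>t\<in>set (G x y). fst (snd t) = y"
  unfolding cellok_def by fastforce

lemma up_facts: "distinct [0..<n]" "set [0..<n] = {..<n}" "sorted_wrt (\<le>) [0..<n]"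
  by (auto simp: up_sorted)
lemma dn_facts: "distinct (rev [0..<n])" "set (rev [0..<n]) = {..<n}" "sorted_wrt (\<ge>) (rev [0..<n])"
  by (auto simp: dn_sorted)

lemmas ok = cellok_blk_up cellok_blk_dn cellok_intl_up cellok_intl_dn

lemma pairAB:
  assumes "subseq u (W (\<lambda>x y. blk s x y [0..<R]) [0..<P] [0..<Q])"
     "subseq u (W (\<lambda>x y. blk s x y (rev [0..<R])) [0..<P] (rev [0..<Q]))"
  shows "length u \<le> P * s"
proof (rule GD1[OF assms[unfolded W_def] row_keys[OF ok(1)] row_keys[OF ok(2)]
        up_facts(1) up_facts(1) up_facts(2) up_facts(2)])
  fix x u' assume "subseq u' (concat (map (\<lambda>y. blk s x y [0..<R]) [0..<Q]))"
    "subseq u' (concat (map (\<lambda>y. blk s x y (rev [0..<R])) (rev [0..<Q])))"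
  then show "length u' \<le> s"
  proof (rule GD2[OF _ _ cell_keys[OF ok(1)] cell_keys[OF ok(2)] up_facts(1) dn_facts(1) up_facts(2) dn_facts(2) up_facts(3) dn_facts(3)])
    fix y u'' assume "subseq u'' (blk s x y [0..<R])" "subseq u'' (blk s x y (rev [0..<R]))"
    then show "length u'' \<le> s" by (rule base0)
  qed
qed

abbreviation "wA s P Q R \<equiv> W (\<lambda>x y. blk s x y [0..<R]) [0..<P] [0..<Q]"
abbreviation "wB s P Q R \<equiv> W (\<lambda>x y. blk s x y (rev [0..<R])) [0..<P] (rev [0..<Q])"
abbreviation "wC s P Q R \<equiv> W (\<lambda>x y. intl s x y (rev [0..<R])) (rev [0..<P]) [0..<Q]"
abbreviation "wD s P Q R \<equiv> W (\<lambda>x y. intl s x y [0..<R]) (rev [0..<P]) (rev [0..<Q])"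

lemma pairAC:
  assumes "subseq u (wA s P Q R)" "subseq u (wC s P Q R)" "0 < s"
  shows "length u \<le> Q * s"
proof (rule GD2[OF assms(1,2)[unfolded W_def] row_keys[OF ok(1)] row_keys[OF ok(4)]
        up_facts(1) dn_facts(1) up_facts(2) dn_facts(2) up_facts(3) dn_facts(3)])
  fix x u' assume "subseq u' (concat (map (\<lambda>y. blk s x y [0..<R]) [0..<Q]))"
    "subseq u' (concat (map (\<lambda>y. intl s x y (rev [0..<R])) [0..<Q]))"
  then show "length u' \<le> Q * s"
  proof (rule GD1[OF _ _ cell_keys[OF ok(1)] cell_keys[OF ok(4)] up_facts(1) up_facts(1) up_facts(2) up_facts(2)])
    fix y u'' assume "subseq u'' (blk s x y [0..<R])" "subseq u'' (intl s x y (rev [0..<R]))"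
    then show "length u'' \<le> s" using base2 assms(3) by blast
  qed
qed

lemma pairAD:
  assumes "subseq u (wA s P Q R)" "subseq u (wD s P Q R)" "0 < s"
  shows "length u \<le> s + R - 1"
proof (rule GD2[OF assms(1,2)[unfolded W_def] row_keys[OF ok(1)] row_keys[OF ok(3)]
        up_facts(1) dn_facts(1) up_facts(2) dn_facts(2) up_facts(3) dn_facts(3)])
  fix x u' assume "subseq u' (concat (map (\<lambda>y. blk s x y [0..<R]) [0..<Q]))"
    "subseq u' (concat (map (\<lambda>y. intl s x y [0..<R]) (rev [0..<Q])))"
  then show "length u' \<le> s + R - 1"
  proof (rule GD2[OF _ _ cell_keys[OF ok(1)] cell_keys[OF ok(3)] up_facts(1) dn_facts(1) up_facts(2) dn_facts(2) up_facts(3) dn_facts(3)])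
    fix y u'' assume "subseq u'' (blk s x y [0..<R])" "subseq u'' (intl s x y [0..<R])"
    then show "length u'' \<le> s + R - 1" using base3 assms(3) by blast
  qed
qed

lemma pairBC:
  assumes "subseq u (wB s P Q R)" "subseq u (wC s P Q R)" "0 < s"
  shows "length u \<le> s + R - 1"
proof (rule GD2[OF assms(1,2)[unfolded W_def] row_keys[OF ok(2)] row_keys[OF ok(4)]
        up_facts(1) dn_facts(1) up_facts(2) dn_facts(2) up_facts(3) dn_facts(3)])
  fix x u' assume a: "subseq u' (concat (map (\<lambda>y. blk s x y (rev [0..<R])) (rev [0..<Q])))"
    "subseq u' (concat (map (\<lambda>y. intl s x y (rev [0..<R])) [0..<Q]))"
  show "length u' \<le> s + R - 1"
  proof (rule GD2[OF a(2,1) cell_keys[OF ok(4)] cell_keys[OF ok(2)] up_facts(1) dn_facts(1) up_facts(2) dn_facts(2) up_facts(3) dn_facts(3)])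
    fix y u'' assume "subseq u'' (intl s x y (rev [0..<R]))" "subseq u'' (blk s x y (rev [0..<R]))"
    then show "length u'' \<le> s + R - 1" using base3' assms(3) by blast
  qed
qed

lemma pairBD:
  assumes "subseq u (wB s P Q R)" "subseq u (wD s P Q R)" "0 < s"
  shows "length u \<le> Q * s"
proof (rule GD2[OF assms(1,2)[unfolded W_def] row_keys[OF ok(2)] row_keys[OF ok(3)]
        up_facts(1) dn_facts(1) up_facts(2) dn_facts(2) up_facts(3) dn_facts(3)])
  fix x u' assume "subseq u' (concat (map (\<lambda>y. blk s x y (rev [0..<R])) (rev [0..<Q])))"
    "subseq u' (concat (map (\<lambda>y. intl s x y [0..<R]) (rev [0..<Q])))"
  then show "length u' \<le> Q * s"
  proof (rule GD1[OF _ _ cell_keys[OF ok(2)] cell_keys[OF ok(3)] dn_facts(1) dn_facts(1) dn_facts(2) dn_facts(2)])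
    fix y u'' assume "subseq u'' (blk s x y (rev [0..<R]))" "subseq u'' (intl s x y [0..<R])"
    then show "length u'' \<le> s" using base2' assms(3) by blast
  qed
qed

lemma pairCD:
  assumes "subseq u (wC s P Q R)" "subseq u (wD s P Q R)" "0 < s"
  shows "length u \<le> P * (2*s - 1)"
proof (rule GD1[OF assms(1,2)[unfolded W_def] row_keys[OF ok(4)] row_keys[OF ok(3)]
        dn_facts(1) dn_facts(1) dn_facts(2) dn_facts(2)])
  fix x u' assume "subseq u' (concat (map (\<lambda>y. intl s x y (rev [0..<R])) [0..<Q]))"
    "subseq u' (concat (map (\<lambda>y. intl s x y [0..<R]) (rev [0..<Q])))"
  then show "length u' \<le> 2*s - 1"
  proof (rule GD2[OF _ _ cell_keys[OF ok(4)] cell_keys[OF ok(3)] up_facts(1) dn_facts(1) up_facts(2) dn_facts(2) up_facts(3) dn_facts(3)])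
    fix y u'' assume "subseq u'' (intl s x y (rev [0..<R]))" "subseq u'' (intl s x y [0..<R])"
    then show "length u'' \<le> 2*s - 1" using base4 assms(3) by blast
  qed
qed



definition enc :: "nat \<Rightarrow> nat \<Rightarrow> nat \<times> nat \<times> nat \<Rightarrow> nat" where
  "enc Q R t = fst t * (Q*R) + fst (snd t) * R + snd (snd t) + 1"

definition grid :: "nat \<Rightarrow> nat \<Rightarrow> nat \<Rightarrow> (nat \<times> nat \<times> nat) set" where
  "grid P Q R = {t. fst t < P \<and> fst (snd t) < Q \<and> snd (snd t) < R}"

definition word :: "nat \<Rightarrow> nat \<Rightarrow> nat \<Rightarrow> (nat \<times> nat \<times> nat) list \<Rightarrow> nat list" where
  "word k Q R w = map (enc Q R) (filter (\<lambda>t. enc Q R t \<le> k) w)"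

lemma set_W: "cellok G R \<Longrightarrow> set xs = {..<P} \<Longrightarrow> set ys = {..<Q} \<Longrightarrow> set (W G xs ys) \<subseteq> grid P Q R"
  unfolding W_def cellok_def grid_def by fastforce

lemma enc_inj: "inj_on (enc Q R) (grid P Q R)"
proof (rule inj_onI)
  fix a b assume a: "a \<in> grid P Q R" and b: "b \<in> grid P Q R" and e: "enc Q R a = enc Q R b"
  obtain x1 y1 z1 where a1: "a = (x1,y1,z1)" by (cases a) auto
  obtain x2 y2 z2 where b1: "b = (x2,y2,z2)" by (cases b) auto
  have z: "z1 < R" "z2 < R" "y1 < Q" "y2 < Q" using a b a1 b1 unfolding grid_def by auto
  have e1: "(x1 * Q + y1) * R + z1 = (x2 * Q + y2) * R + z2"
    using e a1 b1 unfolding enc_def by (simp add: algebra_simps)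
  then have "z1 = z2" using z by (metis mod_mult_self3 mod_less)
  moreover have "x1 * Q + y1 = x2 * Q + y2" using e1 z \<open>z1 = z2\<close> by simp
  ultimately have "z1 = z2" "y1 = y2" "x1 = x2"
    using z by (metis mod_mult_self3 mod_less, metis mod_mult_self3 mod_less,
      metis \<open>x1 * Q + y1 = x2 * Q + y2\<close> z(3,4) div_mult_self3 div_less add_0 less_nat_zero_code add.commute mult.commute)
  then show "a = b" using a1 b1 by simp
qed

lemma enc_surj:
  assumes "1 \<le> l" "l \<le> P*Q*R"
  shows "\<exists>t\<in>grid P Q R. enc Q R t = l"
proof -
  have QR: "0 < Q" "0 < R" using assms by (cases "Q=0"; cases "R=0"; auto)+
  define m where "m = l - 1"
  define t where "t = (m div (Q*R), (m div R) mod Q, m mod R)"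
  have "m < P*(Q*R)" using assms unfolding m_def by (simp add: mult.assoc)
  then have "m div (Q*R) < P" by (simp add: div_less_iff_less_mult QR)
  then have "t \<in> grid P Q R" unfolding t_def grid_def using QR by auto
  moreover have "enc Q R t = l"
  proof -
    have "m div (Q*R) * (Q*R) + (m div R) mod Q * R + m mod R = m"
    proof -
      have "m div R = (m div R) div Q * Q + (m div R) mod Q" by simp
      then have "m div R * R = (m div R) div Q * Q * R + (m div R) mod Q * R"
        by (metis add_mult_distrib)
      moreover have "(m div R) div Q = m div (Q*R)" by (metis div_mult2_eq mult.commute)
      ultimately have "m div R * R = m div (Q*R) * (Q*R) + (m div R) mod Q * R"
        by (simp add: mult.assoc mult.commute)
      moreover have "m div R * R + m mod R = m" by simp
      ultimately show ?thesis by simp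
    qed
    then show ?thesis unfolding enc_def t_def m_def using assms by simp
  qed
  ultimately show ?thesis by blast
qed

lemma count_list_filter_same: "p a \<Longrightarrow> count_list (filter p xs) a = count_list xs a"
  by (induction xs) auto

lemma count_list_map_inj: "inj_on f (insert a (set xs)) \<Longrightarrow> count_list (map f xs) (f a) = count_list xs a"
  by (induction xs) (auto simp: inj_on_def)

lemma filter_W_x:
  assumes "cellok G R" "distinct xs" "x0 \<in> set xs"
  shows "filter (\<lambda>t. fst t = x0) (W G xs ys) = concat (map (\<lambda>y. G x0 y) ys)"
  unfolding W_def using filter_concat_map[OF row_keys[OF assms(1), of xs ys], where v=x0]
    filter_eq_distinct[OF assms(2)] assms(3) by simp

lemma filter_row_y:
  assumes "cellok G R" "distinct ys" "y0 \<in> set ys"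
  shows "filter (\<lambda>t. fst (snd t) = y0) (concat (map (\<lambda>y. G x0 y) ys)) = G x0 y0"
  using filter_concat_map[OF cell_keys[OF assms(1), of ys x0], where v=y0]
    filter_eq_distinct[OF assms(2)] assms(3) by simp

lemma count_W:
  assumes "cellok G R" "distinct xs" "x0 \<in> set xs" "distinct ys" "y0 \<in> set ys"
  shows "count_list (W G xs ys) (x0,y0,z0) = length (filter (\<lambda>t. zc t = z0) (G x0 y0))"
proof -
  have "count_list (W G xs ys) (x0,y0,z0) = length (filter ((=) (x0,y0,z0)) (W G xs ys))"
    by (rule count_list_eq_length_filter)
  also have "filter ((=) (x0,y0,z0)) (W G xs ys)
      = filter (\<lambda>t. zc t = z0) (filter (\<lambda>t. fst (snd t) = y0) (filter (\<lambda>t. fst t = x0) (W G xs ys)))"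
    by (simp add: filter_filter) (rule filter_cong, auto)
  also have "\<dots> = filter (\<lambda>t. zc t = z0) (G x0 y0)"
    using filter_W_x[OF assms(1-3)] filter_row_y[OF assms(1,4,5)] by simp
  finally show ?thesis .
qed

lemma cnt_blk: "distinct zs \<Longrightarrow> z0 \<in> set zs \<Longrightarrow> length (filter (\<lambda>t. zc t = z0) (blk s x y zs)) = s"
  unfolding blk_def
  using filter_concat_map[of zs "\<lambda>z. replicate s (x,y,z)" zc z0] filter_eq_distinct[of zs z0]
  by (cases "s = 0") auto

lemma cnt_intl: "distinct zs \<Longrightarrow> z0 \<in> set zs \<Longrightarrow> length (filter (\<lambda>t. zc t = z0) (intl s x y zs)) = s"
proof -
  assume d: "distinct zs" and z: "z0 \<in> set zs"
  have "filter (\<lambda>t. zc t = z0) (map (\<lambda>z. (x,y,z)) zs) = map (\<lambda>z. (x,y,z)) (filter (\<lambda>z. z = z0) zs)"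
    by (simp add: filter_map comp_def)
  also have "\<dots> = [(x,y,z0)]" using filter_eq_distinct[OF d, of z0] z by simp
  finally have h: "filter (\<lambda>t. zc t = z0) (map (\<lambda>z. (x,y,z)) zs) = [(x,y,z0)]" .
  show ?thesis unfolding intl_def filter_concat using h by (induction s) auto
qed



lemma realpart:
  fixes s k :: nat
  assumes s: "0 < s" and sk: "5 * s \<le> k"
  defines "t \<equiv> (2 * real s ^ 2 * real k) powr (1/3)"
  defines "T0 \<equiv> t + 5/3 * real s"
  defines "P \<equiv> nat \<lfloor>T0 / real (2*s-1)\<rfloor>"
  defines "Q \<equiv> nat \<lfloor>T0 / real s\<rfloor>"
  defines "R \<equiv> nat \<lfloor>T0\<rfloor> + 1 - s"
  shows "real (P * (2*s-1)) \<le> T0" "real (Q * s) \<le> T0" "real (s + R - 1) \<le> T0"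
    "k \<le> P * Q * R" "T0 < real s * real k"
proof -
  have s1: "real s \<ge> 1" using s by simp
  have k5: "real k \<ge> 5" using sk s by linarith
  have ks: "real k \<ge> 5 * real s" using sk by linarith
  have xpos: "2 * real s ^ 2 * real k > 0" using s k5 by simp
  have tpos: "t > 0" unfolding t_def using xpos s sk by simp
  have t3: "t ^ 3 = 2 * real s ^ 2 * real k"
  proof -
    have "t ^ 3 = t powr (real 3)" using tpos by (simp add: powr_realpow)
    also have "\<dots> = 2 * real s ^ 2 * real k" unfolding t_def using xpos by (simp add: powr_powr)
    finally show ?thesis .
  qed
  define u where "u = t / (2 * real s)"
  have tu: "t = 2 * real s * u" unfolding u_def using s by simp
  have u3: "4 * real s * u ^ 3 = real k"
  proof -
    have "(2 * real s * u) ^ 3 = 2 * real s ^ 2 * real k" using t3 tu by simp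
    then have "8 * real s ^ 3 * u ^ 3 = 2 * real s ^ 2 * real k" by (simp add: power_mult_distrib)
    then have "(2 * real s ^ 2) * (4 * real s * u ^ 3) = (2 * real s ^ 2) * real k"
      by (simp add: power3_eq_cube power2_eq_square algebra_simps)
    moreover have "2 * real s ^ 2 \<noteq> 0" using s1 by simp
    ultimately show ?thesis by (metis mult_left_cancel)
  qed
  have upos: "u > 0" unfolding u_def using tpos s by simp
  have u1: "u \<ge> 1"
  proof (rule ccontr)
    assume "\<not> u \<ge> 1"
    then have "u ^ 3 < 1" using upos by (simp add: power_less_one_iff)
    then have "4 * real s * u ^ 3 < 4 * real s" using s by simp
    then show False using u3 ks s1 by linarith
  qed
  have T0u: "T0 = 2 * real s * u + 5/3 * real s" unfolding T0_def using tu by simp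
  have T0s: "T0 \<ge> real s"
  proof -
    have "2 * real s * u \<ge> 0" using upos s1 by simp
    then show ?thesis unfolding T0u using s1 by linarith
  qed
  have d: "real (2*s-1) > 0" using s by simp
  have dle: "real (2*s-1) \<le> 2 * real s" using s by simp
  have pnn: "T0 / real (2*s-1) \<ge> 0" using T0s s1 d by simp
  have Pr: "real P = real_of_int \<lfloor>T0 / real (2*s-1)\<rfloor>" unfolding P_def using pnn by simp
  show "real (P * (2*s-1)) \<le> T0"
  proof -
    have "real P \<le> T0 / real (2*s-1)" using Pr by simp
    then have "real P * real (2*s-1) \<le> T0" using d by (simp add: pos_le_divide_eq)
    then show ?thesis by simp
  qed
  have Plow: "real P > u - 1/6"
  proof -
    define p where "p = T0 / real (2*s-1)"
    have "real P > p - 1" unfolding Pr p_def by (rule real_of_int_floor_gt_diff_one)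
    moreover have "p \<ge> T0 / (2 * real s)"
      unfolding p_def using dle d T0s s1 by (intro divide_left_mono) auto
    moreover have "T0 / (2 * real s) = u + 5/6" unfolding T0u using s1 by (simp add: field_simps)
    ultimately show ?thesis by linarith
  qed
  have Qr: "real Q = real_of_int \<lfloor>T0 / real s\<rfloor>" unfolding Q_def using T0s s1 by simp
  show "real (Q * s) \<le> T0"
  proof -
    have "real Q \<le> T0 / real s" using Qr by simp
    then have "real Q * real s \<le> T0" using s1 by (simp add: pos_le_divide_eq)
    then show ?thesis by simp
  qed
  have Qlow: "real Q > 2*u + 2/3"
  proof -
    have "real Q > T0 / real s - 1" unfolding Qr by (rule real_of_int_floor_gt_diff_one)
    moreover have "T0 / real s = 2*u + 5/3" unfolding T0u using s1 by (simp add: field_simps)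
    ultimately show ?thesis by linarith
  qed
  have "int s \<le> \<lfloor>T0\<rfloor>" using T0s by (simp add: le_floor_iff)
  then have fl: "nat \<lfloor>T0\<rfloor> \<ge> s" by (metis nat_int nat_mono)
  have Rr: "real (s + R - 1) = real_of_int \<lfloor>T0\<rfloor>" unfolding R_def using fl T0s s1 by simp
  show "real (s + R - 1) \<le> T0" using Rr by simp
  have Rlow: "real R > 2 * real s * u + 2/3 * real s"
  proof -
    have "real R = real_of_int \<lfloor>T0\<rfloor> + 1 - real s" unfolding R_def using fl T0s s1 by simp
    then show ?thesis using real_of_int_floor_gt_diff_one[of T0] unfolding T0u by linarith
  qed
  show "k \<le> P * Q * R"
  proof -
    have a: "u - 1/6 > 0" using u1 by simp
    have "(u - 1/6) * (2*u + 2/3) * (2 * real s * u + 2/3 * real s) < real P * real Q * real R"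
      using Plow Qlow Rlow a u1 s1 by (intro mult_strict_mono) (auto intro: mult_pos_pos)
    moreover have "(u - 1/6) * (2*u + 2/3) * (2 * real s * u + 2/3 * real s)
        = 4 * real s * (u^3 + u^2/2 - 1/54)" by (simp add: algebra_simps power3_eq_cube power2_eq_square)
    moreover have "4 * real s * (u^3 + u^2/2 - 1/54) \<ge> 4 * real s * u^3"
    proof -
      have "u^2 \<ge> 1" using u1 by (simp add: one_le_power)
      then have "u^3 + u^2/2 - 1/54 \<ge> u^3" by simp
      then show ?thesis using s1 by (intro mult_left_mono) auto
    qed
    ultimately have "real k < real P * real Q * real R" using u3 by simp
    then have "real k < real (P * Q * R)" by simp
    then show ?thesis by (simp only: of_nat_less_iff less_imp_le_nat)
  qed
  show "T0 < real s * real k"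
  proof -
    define a where "a = real s * real k - 5/3 * real s"
    define b where "b = 2/3 * real s * real k"
    have e: "real s * (real k - 5) \<ge> 0" using s1 k5 by simp
    have "a - b = real s * (real k - 5) / 3" unfolding a_def b_def by (simp add: algebra_simps)
    then have ab: "b \<le> a" using e by simp
    have bpos: "b > 0" unfolding b_def using s1 k5 by simp
    have k25: "real k ^ 2 \<ge> 25" using power_mono[OF k5, of 2] by simp
    have "real s * real k ^ 2 \<ge> 1 * 25" using mult_mono[OF s1 k25] by simp
    then have "4 * real s * real k ^ 2 > 27" by simp
    then have "(2 * real s ^ 2 * real k) * 27 < (2 * real s ^ 2 * real k) * (4 * real s * real k ^ 2)"
      by (rule mult_strict_left_mono[OF _ xpos])
    then have "b ^ 3 > t ^ 3" unfolding b_def t3 by (simp add: power2_eq_square power3_eq_cube algebra_simps)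
    moreover have "b ^ 3 \<le> a ^ 3" using power_mono[OF ab, of 3] bpos by simp
    ultimately have "t ^ 3 < a ^ 3" by simp
    then have "t < a" using power_less_imp_less_base[of t 3 a] ab bpos by simp
    then have "t < real s * real k - 5/3 * real s" unfolding a_def .
    then show ?thesis unfolding T0_def by simp
  qed
qed



lemma word_mp:
  assumes "cellok G R" "distinct xs" "set xs = {..<P}" "distinct ys" "set ys = {..<Q}"
    "\<And>x y z0. z0 < R \<Longrightarrow> length (filter (\<lambda>t. zc t = z0) (G x y)) = s" "k \<le> P*Q*R"
  shows "word k Q R (W G xs ys) \<in> multiperms k (\<lambda>_. s)"
proof -
  let ?w = "W G xs ys"
  have sg: "set ?w \<subseteq> grid P Q R" by (rule set_W[OF assms(1,3,5)])
  show ?thesis unfolding multiperms_def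
  proof (intro CollectI conjI ballI)
    show "set (word k Q R ?w) \<subseteq> {1..k}" unfolding word_def enc_def by auto
    fix l assume l: "l \<in> {1..k}"
    obtain t0 where t0: "t0 \<in> grid P Q R" "enc Q R t0 = l" using enc_surj[of l P Q R] l assms(7) by auto
    obtain x0 y0 z0 where tt: "t0 = (x0,y0,z0)" by (cases t0) auto
    have g: "x0 < P" "y0 < Q" "z0 < R" using t0(1) tt unfolding grid_def by auto
    have "count_list (word k Q R ?w) l = count_list (filter (\<lambda>t. enc Q R t \<le> k) ?w) t0"
      unfolding word_def t0(2)[symmetric]
      by (rule count_list_map_inj, rule inj_on_subset[OF enc_inj]) (use sg t0 in auto)
    also have "\<dots> = count_list ?w t0" using t0 l by (intro count_list_filter_same) auto
    also have "\<dots> = length (filter (\<lambda>t. zc t = z0) (G x0 y0))"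
      unfolding tt by (rule count_W[OF assms(1,2) _ assms(4)]) (use g assms(3,5) in auto)
    also have "\<dots> = s" using assms(6) g by simp
    finally show "count_list (word k Q R ?w) l = s" .
  qed
qed

lemma word_common:
  assumes "set w1 \<subseteq> grid P Q R" "set w2 \<subseteq> grid P Q R"
    "subseq u (word k Q R w1)" "subseq u (word k Q R w2)"
    "\<And>u'. subseq u' w1 \<Longrightarrow> subseq u' w2 \<Longrightarrow> length u' \<le> b"
  shows "length u \<le> b"
proof -
  obtain u1 where u1: "u = map (enc Q R) u1" "subseq u1 (filter (\<lambda>t. enc Q R t \<le> k) w1)"
    using subseq_map_inv[of u "enc Q R"] assms(3) unfolding word_def by blast
  obtain u2 where u2: "u = map (enc Q R) u2" "subseq u2 (filter (\<lambda>t. enc Q R t \<le> k) w2)"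
    using subseq_map_inv[of u "enc Q R"] assms(4) unfolding word_def by blast
  have s1: "subseq u1 w1" using subseq_order.trans[OF u1(2) subseq_filter_left] .
  have s2: "subseq u2 w2" using subseq_order.trans[OF u2(2) subseq_filter_left] .
  have "set u1 \<union> set u2 \<subseteq> grid P Q R" using subseq_set[OF s1] subseq_set[OF s2] assms(1,2) by blast
  then have "u1 = u2" using u1(1) u2(1) inj_on_map_eq_map[OF inj_on_subset[OF enc_inj]] by metis
  then have "length u1 \<le> b" using assms(5) s1 s2 by simp
  then show ?thesis using u1 by simp
qed

lemma cnt_blk_up: "z0 < R \<Longrightarrow> length (filter (\<lambda>t. zc t = z0) (blk s x y [0..<R])) = s"
  by (rule cnt_blk) auto
lemma cnt_blk_dn: "z0 < R \<Longrightarrow> length (filter (\<lambda>t. zc t = z0) (blk s x y (rev [0..<R]))) = s"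
  by (rule cnt_blk) auto
lemma cnt_intl_up: "z0 < R \<Longrightarrow> length (filter (\<lambda>t. zc t = z0) (intl s x y [0..<R])) = s"
  by (rule cnt_intl) auto
lemma cnt_intl_dn: "z0 < R \<Longrightarrow> length (filter (\<lambda>t. zc t = z0) (intl s x y (rev [0..<R]))) = s"
  by (rule cnt_intl) auto

lemma finite_mp: "finite (multiperms k (\<lambda>_. s))"
proof (rule finite_subset)
  show "multiperms k (\<lambda>_. s) \<subseteq> {w. set w \<subseteq> {1..k} \<and> length w = k * s}"
  proof
    fix w assume w: "w \<in> multiperms k (\<lambda>_. s)"
    then have "set w \<subseteq> {1..k}" unfolding multiperms_def by auto
    moreover have "length w = k * s"
    proof -
      have "length w = sum (count_list w) {1..k}" using sum_count_set[OF \<open>set w \<subseteq> {1..k}\<close>] by simp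
      also have "\<dots> = sum (\<lambda>_. s) {1..k}" using w unfolding multiperms_def by (intro sum.cong) auto
      finally show ?thesis by simp
    qed
    ultimately show "w \<in> {w. set w \<subseteq> {1..k} \<and> length w = k * s}" by simp
  qed
  show "finite {w. set w \<subseteq> {1..k} \<and> length w = k * s}" by (rule finite_lists_length_eq) simp
qed

lemma length_mp: "w \<in> multiperms k (\<lambda>_. s) \<Longrightarrow> length w = k * s"
proof -
  assume w: "w \<in> multiperms k (\<lambda>_. s)"
  then have "set w \<subseteq> {1..k}" unfolding multiperms_def by auto
  have "length w = sum (count_list w) {1..k}" using sum_count_set[OF \<open>set w \<subseteq> {1..k}\<close>] by simp
  also have "\<dots> = sum (\<lambda>_. s) {1..k}" using w unfolding multiperms_def by (intro sum.cong) auto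
  finally show ?thesis by simp
qed



definition cs :: "nat list \<Rightarrow> nat list \<Rightarrow> nat \<Rightarrow> bool" where
  "cs w w' M \<longleftrightarrow> (\<forall>u. subseq u w \<longrightarrow> subseq u w' \<longrightarrow> length u \<le> M)"

lemma cs_sym: "cs w w' M \<Longrightarrow> cs w' w M" unfolding cs_def by blast

lemma cs_word:
  assumes "set w1 \<subseteq> grid P Q R" "set w2 \<subseteq> grid P Q R"
    "\<And>u'. subseq u' w1 \<Longrightarrow> subseq u' w2 \<Longrightarrow> length u' \<le> b" "b \<le> M"
  shows "cs (word k Q R w1) (word k Q R w2) M"
  unfolding cs_def using word_common[OF assms(1,2) _ _ assms(3)] assms(4) by (meson le_trans)

theorem theorem12:
  fixes s k :: nat
  assumes "0 < s" and "0 < k" and "real s \<le> real k / 5"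
  shows "real (LCS2 4 (multiperms k (\<lambda>_. s)))
           \<le> (2 * real s ^ 2 * real k) powr (1/3) + 5/3 * real s
              + real s powr (4/3) * real k powr (-1/3)"
proof -
  have sk: "5 * s \<le> k" using assms(3) by simp
  define T0 where "T0 = (2 * real s ^ 2 * real k) powr (1/3) + 5/3 * real s"
  obtain P Q R where PQR: "real (P * (2*s-1)) \<le> T0" "real (Q * s) \<le> T0" "real (s + R - 1) \<le> T0"
    "k \<le> P * Q * R" "T0 < real s * real k"
    using realpart[OF assms(1) sk] unfolding T0_def by blast
  define M where "M = max (P * (2*s-1)) (max (Q * s) (s + R - 1))"
  have MT: "real M \<le> T0" unfolding M_def max_def using PQR(1-3) by (auto simp del: of_nat_mult of_nat_add of_nat_diff)
  have Mlt: "M < k * s" using MT PQR(5)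
    by (metis of_nat_less_iff of_nat_mult mult.commute order_le_less_trans)
  define wa where "wa = word k Q R (wA s P Q R)"
  define wb where "wb = word k Q R (wB s P Q R)"
  define wc where "wc = word k Q R (wC s P Q R)"
  define wd where "wd = word k Q R (wD s P Q R)"
  have ma: "wa \<in> multiperms k (\<lambda>_. s)" unfolding wa_def
    by (rule word_mp[OF ok(1)]) (auto simp: cnt_blk_up PQR(4))
  have mb: "wb \<in> multiperms k (\<lambda>_. s)" unfolding wb_def
    by (rule word_mp[OF ok(2)]) (auto simp: cnt_blk_dn PQR(4))
  have mc: "wc \<in> multiperms k (\<lambda>_. s)" unfolding wc_def
    by (rule word_mp[OF ok(4)]) (auto simp: cnt_intl_dn PQR(4))
  have md: "wd \<in> multiperms k (\<lambda>_. s)" unfolding wd_def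
    by (rule word_mp[OF ok(3)]) (auto simp: cnt_intl_up PQR(4))
  have ga: "set (wA s P Q R) \<subseteq> grid P Q R" by (rule set_W[OF ok(1)]) auto
  have gb: "set (wB s P Q R) \<subseteq> grid P Q R" by (rule set_W[OF ok(2)]) auto
  have gc: "set (wC s P Q R) \<subseteq> grid P Q R" by (rule set_W[OF ok(4)]) auto
  have gd: "set (wD s P Q R) \<subseteq> grid P Q R" by (rule set_W[OF ok(3)]) auto
  have ab: "cs wa wb M" unfolding wa_def wb_def
  proof (rule cs_word[OF ga gb pairAB])
    have "P * s \<le> P * (2*s-1)" using assms(1) by (intro mult_le_mono2) linarith
    then show "P * s \<le> M" unfolding M_def by linarith
  qed
  have ac: "cs wa wc M" unfolding wa_def wc_def
    by (rule cs_word[OF ga gc pairAC]) (auto simp: M_def assms(1))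
  have ad: "cs wa wd M" unfolding wa_def wd_def
    by (rule cs_word[OF ga gd pairAD]) (auto simp: M_def assms(1))
  have bc: "cs wb wc M" unfolding wb_def wc_def
    by (rule cs_word[OF gb gc pairBC]) (auto simp: M_def assms(1))
  have bd: "cs wb wd M" unfolding wb_def wd_def
    by (rule cs_word[OF gb gd pairBD]) (auto simp: M_def assms(1))
  have cd: "cs wc wd M" unfolding wc_def wd_def
    by (rule cs_word[OF gc gd pairCD]) (auto simp: M_def assms(1))
  have neq: "w \<noteq> w'" if "cs w w' M" "w \<in> multiperms k (\<lambda>_. s)" for w w'
  proof
    assume "w = w'"
    then have "length w \<le> M" using that(1) unfolding cs_def by auto
    then show False using length_mp[OF that(2)] Mlt by simp
  qed
  define T where "T = {wa, wb, wc, wd}"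
  have dist: "wa \<noteq> wb" "wa \<noteq> wc" "wa \<noteq> wd" "wb \<noteq> wc" "wb \<noteq> wd" "wc \<noteq> wd"
    using neq ab ac ad bc bd cd ma mb mc by auto
  have cardT: "card T = 4" unfolding T_def using dist by auto
  have TP: "T \<subseteq> multiperms k (\<lambda>_. s)" unfolding T_def using ma mb mc md by auto
  have allcs: "cs w w' M" if "w \<in> T" "w' \<in> T" "w \<noteq> w'" for w w'
    using that ab ac ad bc bd cd cs_sym unfolding T_def by auto
  have maxle: "Max {LCS w w' | w w'. w \<in> T \<and> w' \<in> T \<and> w \<noteq> w'} \<le> M"
  proof (rule Max.boundedI)
    have "{LCS w w' | w w'. w \<in> T \<and> w' \<in> T \<and> w \<noteq> w'} \<subseteq> (\<lambda>(w,w'). LCS w w') ` (T \<times> T)" by auto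
    then show "finite {LCS w w' | w w'. w \<in> T \<and> w' \<in> T \<and> w \<noteq> w'}"
      by (rule finite_subset) (simp add: T_def)
    show "{LCS w w' | w w'. w \<in> T \<and> w' \<in> T \<and> w \<noteq> w'} \<noteq> {}"
      using dist(1) unfolding T_def by blast
    fix a assume "a \<in> {LCS w w' | w w'. w \<in> T \<and> w' \<in> T \<and> w \<noteq> w'}"
    then obtain w w' where "a = LCS w w'" "w \<in> T" "w' \<in> T" "w \<noteq> w'" by blast
    then show "a \<le> M" using allcs[of w w'] unfolding cs_def by (auto intro: LCS_le)
  qed
  have "LCS2 4 (multiperms k (\<lambda>_. s)) \<le> Max {LCS w w' | w w'. w \<in> T \<and> w' \<in> T \<and> w \<noteq> w'}"
    unfolding LCS2_def
  proof (rule Min_le)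
    have "{Max {LCS w w' | w w'. w \<in> T \<and> w' \<in> T \<and> w \<noteq> w'} | T. T \<subseteq> multiperms k (\<lambda>_. s) \<and> card T = 4}
        \<subseteq> (\<lambda>T. Max {LCS w w' | w w'. w \<in> T \<and> w' \<in> T \<and> w \<noteq> w'}) ` Pow (multiperms k (\<lambda>_. s))" by auto
    then show "finite {Max {LCS w w' | w w'. w \<in> T \<and> w' \<in> T \<and> w \<noteq> w'} | T. T \<subseteq> multiperms k (\<lambda>_. s) \<and> card T = 4}"
      by (rule finite_subset) (simp add: finite_mp)
    show "Max {LCS w w' | w w'. w \<in> T \<and> w' \<in> T \<and> w \<noteq> w'}
        \<in> {Max {LCS w w' | w w'. w \<in> T \<and> w' \<in> T \<and> w \<noteq> w'} | T. T \<subseteq> multiperms k (\<lambda>_. s) \<and> card T = 4}"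
      using TP cardT by blast
  qed
  then have "LCS2 4 (multiperms k (\<lambda>_. s)) \<le> M" using maxle by simp
  then have "real (LCS2 4 (multiperms k (\<lambda>_. s))) \<le> T0" using MT by (meson le_trans of_nat_le_iff order_trans)
  moreover have "real s powr (4/3) * real k powr (-1/3) \<ge> 0" by simp
  ultimately show ?thesis unfolding T0_def by linarith
qed

end
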